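(* For every integer $k\ge 1$, $E_k\subseteq E_{k+1}$. That is, if a number can be condensed from every multiset of $k$ decimal digits, then it can be condensed from every multiset of $k+1$ decimal digits.
   Context: Multisets are collections of numbers in which elements may repeat; $A+B$ denotes the multiset union (multiplicities add), and $[S]$ is the set of distinct elements of $S$. For a finite nonempty multiset $S$ of real numbers, $V(S)$ ("the values condensable from $S$") is the smallest set of real numbers such that: (1) if $|S|=1$ then $S\subseteq V(S)$; (2) if $|S|\ge 2$, then for all nonempty multisets $A,B$ with $A+B=S$ and all $a\in V(A)$, $b\in V(B)$, each of $a+b,\ a-b,\ b-a,\ ab,\ a/b,\ b/a,\ a^b,\ b^a$ lies in $V(S)$ whenever it is a well-defined real number (no division by zero); (3) if $a\in V(S)$ is a nonnegative integer then $a!\in V(S)$ (so in particular $0!=1$). Let $D=\{0,1,\dots,9\}$. For $k\ge1$, $E_k=\bigcap\{V(S): S \text{ a multiset with } |S|=k,\ [S]\subseteq D\}$. *)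

theory Defs
  imports Complex_Main "HOL-Library.Multiset"
begin

text \<open>Real exponentiation a^b, as a partial operation: defined exactly when the
value is a well-defined real number (principal value), namely for a > 0 (any b),
for a = 0 with b > 0, and for a < 0 with integer exponent b.\<close>

definition rpow_defined :: "real \<Rightarrow> real \<Rightarrow> bool" where
  "rpow_defined a b \<longleftrightarrow> a > 0 \<or> (a = 0 \<and> b > 0) \<or> (a < 0 \<and> b \<in> \<int>)"

definition rpow :: "real \<Rightarrow> real \<Rightarrow> real" where
  "rpow a b = (if a > 0 then a powr b else if a = 0 then 0 else a powi \<lfloor>b\<rfloor>)"

inductive combines :: "real \<Rightarrow> real \<Rightarrow> real \<Rightarrow> bool" where
  add: "combines a b (a + b)"
| sub1: "combines a b (a - b)"
| sub2: "combines a b (b - a)"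
| mul: "combines a b (a * b)"
| div1: "b \<noteq> 0 \<Longrightarrow> combines a b (a / b)"
| div2: "a \<noteq> 0 \<Longrightarrow> combines a b (b / a)"
| pow1: "rpow_defined a b \<Longrightarrow> combines a b (rpow a b)"
| pow2: "rpow_defined b a \<Longrightarrow> combines a b (rpow b a)"

inductive condensable :: "real multiset \<Rightarrow> real \<Rightarrow> bool" where
  single: "condensable {#x#} x"
| comb: "A \<noteq> {#} \<Longrightarrow> B \<noteq> {#} \<Longrightarrow> condensable A a \<Longrightarrow> condensable B b
          \<Longrightarrow> combines a b c \<Longrightarrow> condensable (A + B) c"
| factorial: "condensable S a \<Longrightarrow> a \<in> \<nat> \<Longrightarrow> condensable S (fact (nat \<lfloor>a\<rfloor>))"

definition V :: "real multiset \<Rightarrow> real set" where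
  "V S = {x. condensable S x}"

definition digits :: "real set" where
  "digits = real ` {0..9}"

definition E :: "nat \<Rightarrow> real set" where
  "E k = \<Inter> {V S | S. size S = k \<and> set_mset S \<subseteq> digits}"

end

theory Submission
  imports Defs
begin

lemma subst_cond:
  assumes "condensable M x"
  shows "d \<in># M \<Longrightarrow> condensable A d \<Longrightarrow> A \<noteq> {#} \<Longrightarrow> condensable (M - {#d#} + A) x"
  using assms
proof (induction arbitrary: d rule: condensable.induct)
  case (single x)
  then show ?case by simp
next
  case (comb A1 B1 a b c)
  show ?case
  proof (cases "d \<in># A1")
    case True
    then obtain A1' where A1: "A1 = add_mset d A1'" by (metis multi_member_split)
    have "condensable (A1 - {#d#} + A) a" using comb True by blast
    moreover have "A1 - {#d#} + A \<noteq> {#}" using comb by simp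
    ultimately have "condensable ((A1 - {#d#} + A) + B1) c"
      using comb condensable.comb by blast
    then show ?thesis using A1 by (simp add: ac_simps)
  next
    case False
    then have T: "d \<in># B1" using comb by simp
    then obtain B1' where B1: "B1 = add_mset d B1'" by (metis multi_member_split)
    have "condensable (B1 - {#d#} + A) b" using comb T by blast
    moreover have "B1 - {#d#} + A \<noteq> {#}" using comb by simp
    ultimately have "condensable (A1 + (B1 - {#d#} + A)) c"
      using comb condensable.comb by blast
    then show ?thesis using B1 by (simp add: ac_simps)
  qed
next
  case (factorial S a)
  then show ?case using condensable.factorial by blast
qed

theorem lemma4p1:
  fixes k :: nat
  assumes "k \<ge> 1"
  shows "E k \<subseteq> E (Suc k)"
proof
  fix x assume xE: "x \<in> E k"
  show "x \<in> E (Suc k)"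
    unfolding E_def
  proof (clarsimp)
    fix S :: "real multiset"
    assume sz: "size S = Suc k" and dg: "set_mset S \<subseteq> digits"
    obtain a S1 where S: "S = add_mset a S1" using sz by (metis size_eq_Suc_imp_eq_union)
    have "size S1 = k" using sz S by simp
    then have "S1 \<noteq> {#}" using assms by auto
    then obtain b S2 where S1: "S1 = add_mset b S2"
      by (metis multiset_cases)
    have ad: "a \<in> digits" and bd: "b \<in> digits" using dg S S1 by auto
    define d where "d = (if b \<le> a then a - b else b - a)"
    have cab: "combines a b d" unfolding d_def
      by (auto intro: combines.sub1 combines.sub2)
    have cd: "condensable ({#a#} + {#b#}) d"
      by (rule condensable.comb[OF _ _ condensable.single condensable.single cab]) auto
    have dd: "d \<in> digits"
    proof -
      obtain i j :: nat where "a = real i" "b = real j" "i \<le> 9" "j \<le> 9"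
        using ad bd unfolding digits_def by auto
      then show ?thesis
      proof (cases "j \<le> i")
        case True
        then show ?thesis using \<open>a = real i\<close> \<open>b = real j\<close> \<open>i \<le> 9\<close>
          unfolding digits_def d_def by (auto simp: image_iff intro!: bexI[of _ "i - j"])
      next
        case False
        then show ?thesis using \<open>a = real i\<close> \<open>b = real j\<close> \<open>j \<le> 9\<close>
          unfolding digits_def d_def by (auto simp: image_iff intro!: bexI[of _ "j - i"])
      qed
    qed
    define S' where "S' = add_mset d S2"
    have "size S' = k" using \<open>size S1 = k\<close> S1 S'_def by simp
    moreover have "set_mset S' \<subseteq> digits" using dg S S1 dd S'_def by auto
    ultimately have "x \<in> V S'" using xE unfolding E_def by blast
    hence "condensable S' x" by (simp add: V_def)
    hence "condensable (S' - {#d#} + ({#a#} + {#b#})) x"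
      using subst_cond[of S' x d "{#a#} + {#b#}"] cd S'_def by simp
    thus "x \<in> V S" using S S1 S'_def by (simp add: V_def ac_simps add_mset_commute)
  qed
qed

end
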